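(* Let $m\ge 2$, $k\ge 1$, $n\ge 1$, and let $\mathcal{A}=(a_{i_1i_2\cdots i_m})\in\mathbb{C}^{[m,n]}$ and $\mathcal{B}=(b_{i_1i_2\cdots i_k})\in\mathbb{C}^{[k,n]}$. Then: (1) $r_i(\mathcal{A}\mathcal{B})\le r_i(\mathcal{A})\,(R(\mathcal{B}))^{m-1}$ for all $i\in[n]$; (2) if $\mathcal{A}$ and $\mathcal{B}$ are nonnegative tensors, then for all $i\in[n]$, \[r_i(\mathcal{A}\mathcal{B})=\sum_{i_2,\ldots,i_m=1}^n a_{ii_2\cdots i_m}\, r_{i_2}(\mathcal{B})\cdots r_{i_m}(\mathcal{B}).\]
   Context: $[n]=\{1,\ldots,n\}$. $\mathbb{C}^{[m,n]}$ (resp. $\mathbb{R}_+^{[m,n]}$) denotes the set of order $m$, dimension $n$ tensors $\mathcal{A}=(a_{i_1\cdots i_m})$, $i_j\in[n]$, with complex (resp. nonnegative real) entries. For $\mathcal{A}\in\mathbb{C}^{[m,n]}$: $r_i(\mathcal{A})=\sum_{i_2,\ldots,i_m=1}^n |a_{ii_2\cdots i_m}|$, $r(\mathcal{A})=\min_{i\in[n]} r_i(\mathcal{A})$, $R(\mathcal{A})=\max_{i\in[n]} r_i(\mathcal{A})$. General product: for $\mathcal{A}\in\mathbb{C}^{[m,n]}$ ($m\ge2$) and $\mathcal{B}\in\mathbb{C}^{[k,n]}$ ($k\ge1$), $\mathcal{A}\mathcal{B}=(c_{i\alpha_1\cdots\alpha_{m-1}})$ is the order $(m-1)(k-1)+1$,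 dimension $n$ tensor with entries $c_{i\alpha_1\cdots\alpha_{m-1}}=\sum_{i_2,\ldots,i_m=1}^n a_{ii_2\cdots i_m} b_{i_2\alpha_1}\cdots b_{i_m\alpha_{m-1}}$ for $i\in[n]$, $\alpha_1,\ldots,\alpha_{m-1}\in[n]^{k-1}$ (here $b_{j\alpha}$ with $\alpha=(j_2,\ldots,j_k)$ means $b_{jj_2\cdots j_k}$). Thus $r_i(\mathcal{A}\mathcal{B})=\sum_{\alpha_1,\ldots,\alpha_{m-1}\in[n]^{k-1}}|c_{i\alpha_1\cdots\alpha_{m-1}}|$. *)

theory Defs
  imports "HOL-Analysis.Analysis"
begin

text \<open>A tensor of order m and dimension n is modelled as a function from index lists
  (of length m, entries in {0..<n}, i.e. 0-based indices) to its entries; values at other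
  lists are irrelevant.\<close>

type_synonym 'a tensor = "nat list \<Rightarrow> 'a"

definition idx :: "nat \<Rightarrow> nat \<Rightarrow> nat list set" where
  "idx m n = {xs. length xs = m \<and> set xs \<subseteq> {..<n}}"

definition row_sum :: "complex tensor \<Rightarrow> nat \<Rightarrow> nat \<Rightarrow> nat \<Rightarrow> real" where
  "row_sum A m n i = (\<Sum>xs\<in>idx (m - 1) n. cmod (A (i # xs)))"

definition max_row_sum :: "complex tensor \<Rightarrow> nat \<Rightarrow> nat \<Rightarrow> real" where
  "max_row_sum A m n = Max ((row_sum A m n) ` {..<n})"

text \<open>The t-th block (t = 0..m-2) of length k-1 of the index list ys = alpha_1 ... alpha_{m-1}.\<close>
definition block :: "nat \<Rightarrow> nat \<Rightarrow> nat list \<Rightarrow> nat list" where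
  "block k t ys = take (k - 1) (drop (t * (k - 1)) ys)"

text \<open>General product AB (A of order m, B of order k, dimension n); the result has order
  (m-1)(k-1)+1 and entry at i # alpha_1 ... alpha_{m-1} equal to
  sum_{i_2..i_m} a_{i i_2..i_m} b_{i_2 alpha_1} ... b_{i_m alpha_{m-1}}.\<close>
definition gen_prod :: "complex tensor \<Rightarrow> nat \<Rightarrow> complex tensor \<Rightarrow> nat \<Rightarrow> nat \<Rightarrow> complex tensor" where
  "gen_prod A m B k n = (\<lambda>xs. (\<Sum>js\<in>idx (m - 1) n.
      A (hd xs # js) * (\<Prod>t<m - 1. B (js ! t # block k t (tl xs)))))"

definition prod_order :: "nat \<Rightarrow> nat \<Rightarrow> nat" where
  "prod_order m k = (m - 1) * (k - 1) + 1"

end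

theory Submission
  imports Defs
begin

lemma finite_idx: "finite (idx q n)"
proof -
  have "idx q n = {xs. set xs \<subseteq> {..<n} \<and> length xs = q}" unfolding idx_def by auto
  thus ?thesis using finite_lists_length_eq[of "{..<n}" q] by simp
qed

lemma idx_nth: "js \<in> idx q n \<Longrightarrow> t < q \<Longrightarrow> js ! t < n"
proof -
  assume a: "js \<in> idx q n" "t < q"
  hence b: "js ! t \<in> set js" unfolding idx_def by simp
  have "set js \<subseteq> {..<n}" using a unfolding idx_def by simp
  with b have "js ! t \<in> {..<n}" by (rule rev_subsetD)
  thus ?thesis by simp
qed

lemma idx_append_sum:
  "(\<Sum>ys\<in>idx (q+r) n. g ys) = (\<Sum>a\<in>idx q n. \<Sum>b\<in>idx r n. g (a@b))"
proof -
  have img: "idx (q+r) n = (\<lambda>(a,b). a@b) ` (idx q n \<times> idx r n)"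
  proof
    show "idx (q+r) n \<subseteq> (\<lambda>(a,b). a@b) ` (idx q n \<times> idx r n)"
    proof
      fix ys assume y: "ys \<in> idx (q+r) n"
      have "take q ys \<in> idx q n" "drop q ys \<in> idx r n" using y unfolding idx_def
        by (auto dest: in_set_takeD in_set_dropD)
      thus "ys \<in> (\<lambda>(a,b). a@b) ` (idx q n \<times> idx r n)"
        by (intro image_eqI[of _ _ "(take q ys, drop q ys)"]) auto
    qed
  next
    show "(\<lambda>(a,b). a@b) ` (idx q n \<times> idx r n) \<subseteq> idx (q+r) n"
      unfolding idx_def by auto
  qed
  have inj: "inj_on (\<lambda>(a,b). a@b) (idx q n \<times> idx r n)"
    unfolding inj_on_def idx_def by auto
  have "(\<Sum>ys\<in>idx (q+r) n. g ys) = (\<Sum>x\<in>idx q n \<times> idx r n. g (case x of (a,b) \<Rightarrow> a@b))"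
    by (subst img, subst sum.reindex[OF inj]) (simp add: comp_def)
  also have "\<dots> = (\<Sum>a\<in>idx q n. \<Sum>b\<in>idx r n. g (a@b))"
    by (simp add: sum.cartesian_product case_prod_unfold)
  finally show ?thesis .
qed

lemma block_prod:
  "(\<Sum>ys\<in>idx (p*q) n. \<Prod>t<p. f t (take q (drop (t*q) ys))) = (\<Prod>t<p. \<Sum>a\<in>idx q n. (f t a :: real))"
proof (induction p arbitrary: f)
  case 0
  have "idx 0 n = {[]}" unfolding idx_def by auto
  thus ?case by simp
next
  case (Suc p)
  have "(\<Sum>ys\<in>idx (Suc p*q) n. \<Prod>t<Suc p. f t (take q (drop (t*q) ys)))
      = (\<Sum>a\<in>idx q n. \<Sum>b\<in>idx (p*q) n. \<Prod>t<Suc p. f t (take q (drop (t*q) (a@b))))"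
    by (simp add: idx_append_sum)
  also have "\<dots> = (\<Sum>a\<in>idx q n. \<Sum>b\<in>idx (p*q) n. f 0 a * (\<Prod>t<p. f (Suc t) (take q (drop (t*q) b))))"
  proof (intro sum.cong refl)
    fix a b assume a: "a \<in> idx q n"
    hence la: "length a = q" unfolding idx_def by auto
    show "(\<Prod>t<Suc p. f t (take q (drop (t*q) (a@b)))) = f 0 a * (\<Prod>t<p. f (Suc t) (take q (drop (t*q) b)))"
      by (subst prod.lessThan_Suc_shift) (simp add: la)
  qed
  also have "\<dots> = (\<Sum>a\<in>idx q n. f 0 a) * (\<Sum>b\<in>idx (p*q) n. (\<Prod>t<p. f (Suc t) (take q (drop (t*q) b))))"
    by (rule sum_product[symmetric])
  also have "\<dots> = (\<Sum>a\<in>idx q n. f 0 a) * (\<Prod>t<p. \<Sum>a\<in>idx q n. f (Suc t) a)"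
    using Suc.IH[of "\<lambda>t. f (Suc t)"] by simp
  also have "\<dots> = (\<Prod>t<Suc p. \<Sum>a\<in>idx q n. f t a)"
    by (subst prod.lessThan_Suc_shift) simp
  finally show ?case .
qed

lemma block_idx:
  assumes "ys \<in> idx ((m-1)*(k-1)) n" "t < m - 1" "j < n" "k \<ge> 1"
  shows "j # block k t ys \<in> idx k n"
proof -
  have "t*(k-1) + (k-1) \<le> (m-1)*(k-1)"
    using assms(2) by (metis Suc_leI add.commute mult_Suc mult_le_mono1)
  hence "length (block k t ys) = k - 1" using assms(1) unfolding block_def idx_def by auto
  moreover have "set (block k t ys) \<subseteq> {..<n}" using assms(1) unfolding block_def idx_def
    by (auto dest: in_set_takeD in_set_dropD)
  ultimately show ?thesis using assms(3,4) unfolding idx_def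
    by (cases k) auto
qed

theorem lemma2p4:
  fixes A B :: "complex tensor" and m k n :: nat
  assumes "m \<ge> 2" and "k \<ge> 1" and "n \<ge> 1"
  shows "(\<forall>i<n. row_sum (gen_prod A m B k n) (prod_order m k) n i
            \<le> row_sum A m n i * (max_row_sum B k n) ^ (m - 1))
     \<and> ((\<forall>xs\<in>idx m n. A xs \<in> \<real> \<and> Re (A xs) \<ge> 0) \<and> (\<forall>xs\<in>idx k n. B xs \<in> \<real> \<and> Re (B xs) \<ge> 0)
         \<longrightarrow> (\<forall>i<n. row_sum (gen_prod A m B k n) (prod_order m k) n i
               = (\<Sum>js\<in>idx (m - 1) n. Re (A (i # js)) * (\<Prod>t<m - 1. row_sum B k n (js ! t)))))"
proof -
  define C where "C = gen_prod A m B k n"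
  define Y where "Y = idx ((m-1)*(k-1)) n"
  define J where "J = idx (m-1) n"
  have po: "prod_order m k - 1 = (m-1)*(k-1)" unfolding prod_order_def by simp
  have Cval: "C (i # ys) = (\<Sum>js\<in>J. A (i # js) * (\<Prod>t<m - 1. B (js ! t # block k t ys)))" for i ys
    unfolding C_def gen_prod_def J_def by simp
  have rs: "row_sum C (prod_order m k) n i = (\<Sum>ys\<in>Y. cmod (C (i # ys)))" for i
    unfolding row_sum_def Y_def po ..
  define G where "G i js ys = cmod (A (i # js)) * (\<Prod>t<m - 1. cmod (B (js ! t # block k t ys)))" for i js ys
  have key: "(\<Sum>ys\<in>Y. \<Sum>js\<in>J. G i js ys) = (\<Sum>js\<in>J. cmod (A (i # js)) * (\<Prod>t<m - 1. row_sum B k n (js ! t)))" for i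
  proof -
    have "(\<Sum>ys\<in>Y. \<Sum>js\<in>J. G i js ys) = (\<Sum>js\<in>J. \<Sum>ys\<in>Y. G i js ys)"
      by (rule sum.swap)
    also have "\<dots> = (\<Sum>js\<in>J. cmod (A (i # js)) * (\<Prod>t<m - 1. row_sum B k n (js ! t)))"
    proof (intro sum.cong refl)
      fix js
      have "(\<Sum>ys\<in>Y. G i js ys) = cmod (A (i # js)) * (\<Sum>ys\<in>Y. \<Prod>t<m - 1. cmod (B (js ! t # take (k-1) (drop (t*(k-1)) ys))))"
        unfolding G_def block_def by (simp add: sum_distrib_left)
      also have "\<dots> = cmod (A (i # js)) * (\<Prod>t<m - 1. \<Sum>a\<in>idx (k-1) n. cmod (B (js ! t # a)))"
        unfolding Y_def by (subst block_prod[where p="m-1" and q="k-1" and n=n and f="\<lambda>t a. cmod (B (js ! t # a))"]) simp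
      finally show "(\<Sum>ys\<in>Y. G i js ys) = cmod (A (i # js)) * (\<Prod>t<m - 1. row_sum B k n (js ! t))"
        unfolding row_sum_def by simp
    qed
    finally show ?thesis .
  qed
  have part1: "row_sum C (prod_order m k) n i \<le> row_sum A m n i * (max_row_sum B k n) ^ (m - 1)"
    if i: "i < n" for i
  proof -
    have "row_sum C (prod_order m k) n i \<le> (\<Sum>ys\<in>Y. \<Sum>js\<in>J. G i js ys)"
      unfolding rs
    proof (intro sum_mono)
      fix ys
      have "cmod (C (i # ys)) \<le> (\<Sum>js\<in>J. cmod (A (i # js) * (\<Prod>t<m - 1. B (js ! t # block k t ys))))"
        unfolding Cval by (rule norm_sum)
      also have "\<dots> = (\<Sum>js\<in>J. G i js ys)"
        unfolding G_def by (simp add: norm_mult prod_norm)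
      finally show "cmod (C (i # ys)) \<le> (\<Sum>js\<in>J. G i js ys)" .
    qed
    also have "\<dots> = (\<Sum>js\<in>J. cmod (A (i # js)) * (\<Prod>t<m - 1. row_sum B k n (js ! t)))"
      by (rule key)
    also have "\<dots> \<le> (\<Sum>js\<in>J. cmod (A (i # js)) * (max_row_sum B k n) ^ (m - 1))"
    proof (intro sum_mono mult_left_mono norm_ge_zero)
      fix js assume js: "js \<in> J"
      have "(\<Prod>t<m - 1. row_sum B k n (js ! t)) \<le> (\<Prod>t<m - 1. max_row_sum B k n)"
      proof (intro prod_mono conjI)
        fix t assume "t \<in> {..<m-1}"
        hence "js ! t < n" using js unfolding J_def by (simp add: idx_nth)
        thus "row_sum B k n (js ! t) \<le> max_row_sum B k n"
          unfolding max_row_sum_def by (intro Max_ge) auto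
        show "0 \<le> row_sum B k n (js ! t)" unfolding row_sum_def by (intro sum_nonneg) auto
      qed
      thus "(\<Prod>t<m - 1. row_sum B k n (js ! t)) \<le> (max_row_sum B k n) ^ (m - 1)" by simp
    qed
    also have "\<dots> = row_sum A m n i * (max_row_sum B k n) ^ (m - 1)"
      unfolding row_sum_def J_def by (simp add: sum_distrib_right)
    finally show ?thesis .
  qed
  have part2: "row_sum C (prod_order m k) n i
               = (\<Sum>js\<in>J. Re (A (i # js)) * (\<Prod>t<m - 1. row_sum B k n (js ! t)))"
    if nA: "\<forall>xs\<in>idx m n. A xs \<in> \<real> \<and> Re (A xs) \<ge> 0"
      and nB: "\<forall>xs\<in>idx k n. B xs \<in> \<real> \<and> Re (B xs) \<ge> 0" and i: "i < n" for i
  proof -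
    have realz: "z = complex_of_real (cmod z)" if "z \<in> \<real>" "Re z \<ge> 0" for z
    proof -
      obtain r where r: "z = complex_of_real r" using Reals_cases[OF \<open>z \<in> \<real>\<close>] by blast
      thus ?thesis using \<open>Re z \<ge> 0\<close> by simp
    qed
    have realc: "cmod z = Re z" if "z \<in> \<real>" "Re z \<ge> 0" for z
    proof -
      obtain r where r: "z = complex_of_real r" using Reals_cases[OF \<open>z \<in> \<real>\<close>] by blast
      thus ?thesis using \<open>Re z \<ge> 0\<close> by simp
    qed
    have Aid: "A (i # js) = complex_of_real (cmod (A (i # js)))" "cmod (A (i # js)) = Re (A (i # js))"
      if "js \<in> J" for js
    proof -
      have h: "i # js \<in> idx m n" using that i assms(1) unfolding J_def idx_def by auto
      show "A (i # js) = complex_of_real (cmod (A (i # js)))" using nA h by (intro realz) auto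
      show "cmod (A (i # js)) = Re (A (i # js))" using nA h by (intro realc) auto
    qed
    have "row_sum C (prod_order m k) n i = (\<Sum>ys\<in>Y. \<Sum>js\<in>J. G i js ys)"
      unfolding rs
    proof (intro sum.cong refl)
      fix ys assume ys: "ys \<in> Y"
      have "C (i # ys) = (\<Sum>js\<in>J. complex_of_real (G i js ys))"
        unfolding Cval
      proof (intro sum.cong refl)
        fix js assume js: "js \<in> J"
        have "(\<Prod>t<m - 1. B (js ! t # block k t ys)) = (\<Prod>t<m - 1. complex_of_real (cmod (B (js ! t # block k t ys))))"
        proof (intro prod.cong refl)
          fix t assume "t \<in> {..<m-1}"
          moreover have "js ! t < n" using js \<open>t \<in> {..<m-1}\<close> unfolding J_def by (simp add: idx_nth)
          ultimately have "js ! t # block k t ys \<in> idx k n" using block_idx ys assms(2) unfolding Y_def by auto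
          thus "B (js ! t # block k t ys) = complex_of_real (cmod (B (js ! t # block k t ys)))"
            using nB by (intro realz) auto
        qed
        also have "\<dots> = complex_of_real (\<Prod>t<m - 1. cmod (B (js ! t # block k t ys)))"
          by (rule of_real_prod[symmetric])
        finally have P: "(\<Prod>t<m - 1. B (js ! t # block k t ys)) = complex_of_real (\<Prod>t<m - 1. cmod (B (js ! t # block k t ys)))" .
        have "A (i # js) * (\<Prod>t<m - 1. B (js ! t # block k t ys)) = complex_of_real (cmod (A (i # js))) * complex_of_real (\<Prod>t<m - 1. cmod (B (js ! t # block k t ys)))"
          by (rule arg_cong2[where f="(*)", OF Aid(1)[OF js] P])
        also have "\<dots> = complex_of_real (G i js ys)"
          unfolding G_def by (rule of_real_mult[symmetric])
        finally show "A (i # js) * (\<Prod>t<m - 1. B (js ! t # block k t ys)) = complex_of_real (G i js ys)" .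
      qed
      also have "\<dots> = complex_of_real (\<Sum>js\<in>J. G i js ys)" by (rule of_real_sum[symmetric])
      finally have "cmod (C (i # ys)) = cmod (complex_of_real (\<Sum>js\<in>J. G i js ys))" by (rule arg_cong)
      also have "\<dots> = \<bar>\<Sum>js\<in>J. G i js ys\<bar>" by (rule norm_of_real)
      finally have "cmod (C (i # ys)) = \<bar>\<Sum>js\<in>J. G i js ys\<bar>" .
      also have "\<dots> = (\<Sum>js\<in>J. G i js ys)"
        unfolding G_def by (intro abs_of_nonneg sum_nonneg mult_nonneg_nonneg prod_nonneg) auto
      finally show "cmod (C (i # ys)) = (\<Sum>js\<in>J. G i js ys)" .
    qed
    also have "\<dots> = (\<Sum>js\<in>J. cmod (A (i # js)) * (\<Prod>t<m - 1. row_sum B k n (js ! t)))"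
      by (rule key)
    also have "\<dots> = (\<Sum>js\<in>J. Re (A (i # js)) * (\<Prod>t<m - 1. row_sum B k n (js ! t)))"
      using Aid(2) by (intro sum.cong refl) auto
    finally show ?thesis .
  qed
  show ?thesis using part1 part2 unfolding C_def J_def by blast
qed

end
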